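(* Let $L \in R[x][\partial]$ have order $r>0$ and let $T$ be a desingularized operator for $L$. Write $\mathrm{lc}_\partial(T) = a g$ with $a \in R$ and $g \in R[x]$ primitive. If $k \in \mathbb{N}$ is such that $T \in M_k(L)$, then $$\mathrm{cont}(L) = \big(R[x][\partial]\cdot M_k(L)\big) : a^{\infty}.$$
   Context: $R$ is a principal ideal domain with quotient field $Q_R$. $\sigma$ is an $R$-automorphism of $R[x]$ with $\sigma(x)=\gamma x+\tau$ ($\gamma,\tau\in R$, $\gamma$ a unit), and $\delta$ is an $R$-linear $\sigma$-derivation of $R[x]$ (i.e. $\delta(fg)=\sigma(f)\delta(g)+\delta(f)g$) with $\delta(x)\in R[x]$ of degree at most $1$. $R[x][\partial]$ is the Ore algebra of polynomials in $\partial$ over $R[x]$ with multiplication determined by $\partial p=\sigma(p)\partial+\delta(p)$ for $p\in R[x]$; $\sigma,\delta$ extend to $Q_R(x)$, giving the Ore algebra $Q_R(x)[\partial]\supseteq R[x][\partial]$. For nonzero $L=\ell_r\partial^r+\dots+\ell_0$ with $\ell_i\in R[x]$, $\ell_r\neq 0$, the order is $\deg_\partial L=r$ and the leading coefficient is $\mathrm{lc}_\partial(L)=\ell_r$. A polynomial in $R[x]$ is primitive if the gcd of its coefficients is $1$; every nonzero $f\in R[x]$ is $cg$ with $c\in R$ (its content) and $g$ primitive. The contraction ideal is $\mathrm{cont}(L)=Q_R(x)[\partial]L\cap R[x][\partial]$, and $M_k(L)=\{P\in\mathrm{cont}(L): \deg_\partial P\le k\}$ (including $0$). For a left ideal $I$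 of $R[x][\partial]$ and $a\in R$, $I:a^\infty=\{P\in R[x][\partial]: a^iP\in I \text{ for some } i\in\mathbb{N}\}$; $R[x][\partial]\cdot S$ denotes the left ideal generated by $S$. Removability: for $L$ of positive order and $p\in R[x]$ dividing $\mathrm{lc}_\partial(L)$, $p$ is removable from $L$ at order $k$ if there are $P\in Q_R(x)[\partial]$ of order $k$ and $w,v\in R[x]$ with $\gcd(p,w)=1$ in $R[x]$ such that $PL\in R[x][\partial]$ and $\sigma^{-k}(\mathrm{lc}_\partial(PL))=\frac{w}{vp}\mathrm{lc}_\partial(L)$; $p$ is removable if removable at some order $k\in\mathbb{N}$, and non-removable otherwise. Desingularized operator: let $L$ have order $r>0$ and $\mathrm{lc}_\partial(L)=c\,p_1^{e_1}\cdots p_m^{e_m}$ with $c\in R$ and $p_1,\dots,p_m\in R[x]\setminus R$ irreducible and pairwise coprime. An operator $T\in R[x][\partial]$ of order $k$ is a desingularized operator for $L$ if $T\in\mathrm{cont}(L)$ and $\sigma^{r-k}(\mathrm{lc}_\partial(T))=\frac{a}{b\,p_1^{k_1}\cdots p_m^{k_m}}\mathrm{lc}_\partial(L)$ for some $a,b\in R$, $b\ne0$, and nonnegative integers $k_i$ such that $p_i^{d_i}$ is non-removable from $L$ for every integer $d_i>k_i$, $i=1,\dots,m$. *)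

theory Defs
  imports "HOL-Computational_Algebra.Polynomial" "HOL-Computational_Algebra.Fraction_Field"
          "HOL-Computational_Algebra.Factorial_Ring"
begin

definition pid :: "'a::idom itself \<Rightarrow> bool" where
  "pid _ \<longleftrightarrow> (\<forall>I::'a set. (0 \<in> I \<and> (\<forall>x\<in>I. \<forall>y\<in>I. x + y \<in> I) \<and> (\<forall>r x. x \<in> I \<longrightarrow> r * x \<in> I))
                 \<longrightarrow> (\<exists>g. I = {r * g | r. True}))"

text \<open>Embedding of R[x] into its fraction field, which is Q_R(x).\<close>
definition emb :: "'a::idom poly \<Rightarrow> 'a poly fract" where
  "emb p = Fract p 1"

definition ore_sigma :: "'a::comm_ring_1 \<Rightarrow> 'a \<Rightarrow> 'a poly \<Rightarrow> 'a poly" where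
  "ore_sigma \<gamma> \<tau> p = pcompose p [:\<tau>, \<gamma>:]"

definition map_ipow :: "('b \<Rightarrow> 'b) \<Rightarrow> int \<Rightarrow> 'b \<Rightarrow> 'b" where
  "map_ipow s n = (if n \<ge> 0 then s ^^ nat n else inv s ^^ nat (- n))"

definition ring_endo :: "('k::comm_ring_1 \<Rightarrow> 'k) \<Rightarrow> bool" where
  "ring_endo s \<longleftrightarrow> (\<forall>a b. s (a + b) = s a + s b) \<and> (\<forall>a b. s (a * b) = s a * s b) \<and> s 1 = 1"

definition sigma_derivation :: "('k::comm_ring_1 \<Rightarrow> 'k) \<Rightarrow> ('k \<Rightarrow> 'k) \<Rightarrow> bool" where
  "sigma_derivation s d \<longleftrightarrow> (\<forall>a b. d (a + b) = d a + d b) \<and> (\<forall>a b. d (a * b) = s a * d b + d a * b)"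

text \<open>Ore operators sum_i c_i D^i over a coefficient ring are represented as polynomials
  (in D) with those coefficients; dmul is left multiplication by D, ore_mult the Ore product.\<close>
definition dmul :: "('k::comm_ring_1 \<Rightarrow> 'k) \<Rightarrow> ('k \<Rightarrow> 'k) \<Rightarrow> 'k poly \<Rightarrow> 'k poly" where
  "dmul s d P = pCons 0 (map_poly s P) + map_poly d P"

definition ore_mult :: "('k::comm_ring_1 \<Rightarrow> 'k) \<Rightarrow> ('k \<Rightarrow> 'k) \<Rightarrow> 'k poly \<Rightarrow> 'k poly \<Rightarrow> 'k poly" where
  "ore_mult s d A B = (\<Sum>i\<le>degree A. smult (coeff A i) ((dmul s d ^^ i) B))"

text \<open>Standing data: gamma unit, delta an R-linear sigma-derivation of R[x] with deg delta(x) \<le> 1,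
  sQ, dQ the extensions of sigma, delta to Q_R(x) (these are unique).\<close>
definition ore_data :: "'a::idom \<Rightarrow> 'a \<Rightarrow> ('a poly \<Rightarrow> 'a poly)
     \<Rightarrow> ('a poly fract \<Rightarrow> 'a poly fract) \<Rightarrow> ('a poly fract \<Rightarrow> 'a poly fract) \<Rightarrow> bool" where
  "ore_data \<gamma> \<tau> \<delta> sQ dQ \<longleftrightarrow>
     \<gamma> dvd 1 \<and>
     sigma_derivation (ore_sigma \<gamma> \<tau>) \<delta> \<and> (\<forall>c p. \<delta> (smult c p) = smult c (\<delta> p)) \<and>
     degree (\<delta> [:0, 1:]) \<le> 1 \<and>
     ring_endo sQ \<and> sigma_derivation sQ dQ \<and>
     (\<forall>p. sQ (emb p) = emb (ore_sigma \<gamma> \<tau> p)) \<and> (\<forall>p. dQ (emb p) = emb (\<delta> p))"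

definition lift_op :: "'a::idom poly poly \<Rightarrow> 'a poly fract poly" where
  "lift_op P = map_poly emb P"

definition contraction :: "('a::idom poly fract \<Rightarrow> 'a poly fract) \<Rightarrow> ('a poly fract \<Rightarrow> 'a poly fract)
     \<Rightarrow> 'a poly poly \<Rightarrow> 'a poly poly set" where
  "contraction sQ dQ L = {P. \<exists>Q. lift_op P = ore_mult sQ dQ Q (lift_op L)}"

definition Mk :: "('a::idom poly fract \<Rightarrow> 'a poly fract) \<Rightarrow> ('a poly fract \<Rightarrow> 'a poly fract)
     \<Rightarrow> nat \<Rightarrow> 'a poly poly \<Rightarrow> 'a poly poly set" where
  "Mk sQ dQ k L = {P \<in> contraction sQ dQ L. degree P \<le> k}"

definition left_ideal_gen :: "('k::comm_ring_1 \<Rightarrow> 'k) \<Rightarrow> ('k \<Rightarrow> 'k) \<Rightarrow> 'k poly set \<Rightarrow> 'k poly set" where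
  "left_ideal_gen s d S = {P. \<exists>xs. set (map snd xs) \<subseteq> S \<and>
        P = sum_list (map (\<lambda>(Q, B). ore_mult s d Q B) xs)}"

definition saturation :: "'a::idom poly poly set \<Rightarrow> 'a \<Rightarrow> 'a poly poly set" where
  "saturation I a = {P. \<exists>i::nat. smult [:a ^ i:] P \<in> I}"

definition coprime_r :: "'a::idom poly \<Rightarrow> 'a poly \<Rightarrow> bool" where
  "coprime_r p q \<longleftrightarrow> (\<forall>c. c dvd p \<longrightarrow> c dvd q \<longrightarrow> c dvd 1)"

definition primitive :: "'a::idom poly \<Rightarrow> bool" where
  "primitive g \<longleftrightarrow> (\<forall>c. (\<forall>i. c dvd coeff g i) \<longrightarrow> c dvd 1)"

definition removable_at :: "'a::idom \<Rightarrow> 'a \<Rightarrow> ('a poly fract \<Rightarrow> 'a poly fract) \<Rightarrow> ('a poly fract \<Rightarrow> 'a poly fract)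
     \<Rightarrow> 'a poly poly \<Rightarrow> 'a poly \<Rightarrow> nat \<Rightarrow> bool" where
  "removable_at \<gamma> \<tau> sQ dQ L p k \<longleftrightarrow>
     degree L > 0 \<and> p dvd lead_coeff L \<and>
     (\<exists>P w v PL. P \<noteq> 0 \<and> degree P = k \<and> coprime_r p w \<and> v \<noteq> 0 \<and>
        lift_op PL = ore_mult sQ dQ P (lift_op L) \<and>
        emb (map_ipow (ore_sigma \<gamma> \<tau>) (- int k) (lead_coeff PL))
          = emb w / (emb v * emb p) * emb (lead_coeff L))"

definition non_removable :: "'a::idom \<Rightarrow> 'a \<Rightarrow> ('a poly fract \<Rightarrow> 'a poly fract) \<Rightarrow> ('a poly fract \<Rightarrow> 'a poly fract)
     \<Rightarrow> 'a poly poly \<Rightarrow> 'a poly \<Rightarrow> bool" where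
  "non_removable \<gamma> \<tau> sQ dQ L p \<longleftrightarrow> \<not> (\<exists>k. removable_at \<gamma> \<tau> sQ dQ L p k)"

definition desingularized :: "'a::idom \<Rightarrow> 'a \<Rightarrow> ('a poly fract \<Rightarrow> 'a poly fract) \<Rightarrow> ('a poly fract \<Rightarrow> 'a poly fract)
     \<Rightarrow> 'a poly poly \<Rightarrow> 'a poly poly \<Rightarrow> bool" where
  "desingularized \<gamma> \<tau> sQ dQ L T \<longleftrightarrow>
     degree L > 0 \<and> T \<noteq> 0 \<and> T \<in> contraction sQ dQ L \<and>
     (\<exists>c ps es. length es = length ps \<and>
        lead_coeff L = [:c:] * (\<Prod>i<length ps. (ps ! i) ^ (es ! i)) \<and>
        (\<forall>i<length ps. irreducible (ps ! i) \<and> degree (ps ! i) > 0 \<and> es ! i > 0) \<and>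
        (\<forall>i<length ps. \<forall>j<length ps. i \<noteq> j \<longrightarrow> coprime_r (ps ! i) (ps ! j)) \<and>
        (\<exists>a b ks. b \<noteq> 0 \<and> length ks = length ps \<and>
           emb (map_ipow (ore_sigma \<gamma> \<tau>) (int (degree L) - int (degree T)) (lead_coeff T))
             = emb [:a:] / (emb [:b:] * emb (\<Prod>i<length ps. (ps ! i) ^ (ks ! i))) * emb (lead_coeff L) \<and>
           (\<forall>i<length ps. \<forall>d. d > ks ! i \<longrightarrow> non_removable \<gamma> \<tau> sQ dQ L ((ps ! i) ^ d))))"

end

theory Submission
  imports Defs "HOL-Computational_Algebra.Polynomial_Factorial" "HOL-Computational_Algebra.Field_as_Ring"
begin

lemma degree_map_poly_le: "f 0 = 0 \<Longrightarrow> degree (map_poly f p) \<le> degree p"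
  by (rule degree_le) (simp add: coeff_map_poly coeff_eq_0)

lemma smult_sum_right: "smult c (sum f S) = sum (\<lambda>i. smult c (f i)) S"
  by (induction S rule: infinite_finite_induct) (auto simp: smult_add_right)

lemma map_poly_add_gen:
  assumes "\<And>a b. f (a + b) = f a + f b" "f 0 = 0"
  shows "map_poly f (P + Q) = map_poly f P + map_poly f Q"
  by (intro poly_eqI) (simp add: coeff_map_poly assms)

lemma map_poly_sum_gen:
  assumes "\<And>a b. f (a + b) = f a + f b" "f 0 = 0"
  shows "map_poly f (sum g S) = sum (\<lambda>i. map_poly f (g i)) S"
  by (induction S rule: infinite_finite_induct) (auto simp: map_poly_add_gen[OF assms])

lemma re_add: "ring_endo s \<Longrightarrow> s (a + b) = s a + s b" by (simp add: ring_endo_def)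
lemma re_mult: "ring_endo s \<Longrightarrow> s (a * b) = s a * s b" by (simp add: ring_endo_def)
lemma re_1: "ring_endo s \<Longrightarrow> s 1 = 1" by (simp add: ring_endo_def)
lemma re_0: "ring_endo s \<Longrightarrow> s 0 = 0"
proof -
  assume "ring_endo s"
  then have "s (0 + 0) = s 0 + s 0" by (rule re_add)
  then show ?thesis by simp
qed
lemma sd_add: "sigma_derivation s d \<Longrightarrow> d (a + b) = d a + d b" by (simp add: sigma_derivation_def)
lemma sd_mult: "sigma_derivation s d \<Longrightarrow> d (a * b) = s a * d b + d a * b" by (simp add: sigma_derivation_def)
lemma sd_0: "sigma_derivation s d \<Longrightarrow> d 0 = 0"
proof -
  assume "sigma_derivation s d"
  then have "d (0 + 0) = d 0 + d 0" by (rule sd_add)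
  then show ?thesis by simp
qed

lemma coeff_dmul: "coeff (dmul s d P) n = (if n = 0 then 0 else s (coeff P (n - 1))) + d (coeff P n)"
  if "s 0 = 0" "d 0 = 0"
  using that by (cases n) (simp_all add: dmul_def coeff_map_poly)

lemma ore_mult_bound:
  assumes "degree A \<le> N"
  shows "ore_mult s d A B = (\<Sum>i\<le>N. smult (coeff A i) ((dmul s d ^^ i) B))"
  unfolding ore_mult_def
  by (rule sum.mono_neutral_left) (use assms in \<open>auto simp: coeff_eq_0\<close>)

context
  fixes s d :: "'k::comm_ring_1 \<Rightarrow> 'k"
  assumes RS: "ring_endo s" and SD: "sigma_derivation s d"
begin

lemma s0: "s 0 = 0" using re_0[OF RS] .
lemma d0: "d 0 = 0" using sd_0[OF SD] .

lemma coeff_dmul': "coeff (dmul s d P) n = (if n = 0 then 0 else s (coeff P (n - 1))) + d (coeff P n)"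
  using coeff_dmul[of s d, OF s0 d0] .

lemma dmul_add: "dmul s d (P + Q) = dmul s d P + dmul s d Q"
  by (intro poly_eqI) (simp add: coeff_dmul' re_add[OF RS] sd_add[OF SD])

lemma dmul_0: "dmul s d 0 = 0"
  by (intro poly_eqI) (simp add: coeff_dmul' s0 d0)

lemma dmul_sum: "dmul s d (sum f S) = sum (\<lambda>i. dmul s d (f i)) S"
  by (induction S rule: infinite_finite_induct) (auto simp: dmul_add dmul_0)

lemma dmul_pow_add: "(dmul s d ^^ i) (P + Q) = (dmul s d ^^ i) P + (dmul s d ^^ i) Q"
  by (induction i) (auto simp: dmul_add)

lemma dmul_pow_0: "(dmul s d ^^ i) 0 = 0"
  by (induction i) (auto simp: dmul_0)

lemma dmul_smult: "dmul s d (smult c P) = smult (s c) (dmul s d P) + smult (d c) P"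
  by (intro poly_eqI) (simp add: coeff_dmul' re_add[OF RS] re_mult[OF RS] sd_mult[OF SD] algebra_simps s0 d0)

lemma degree_dmul_pow: "degree ((dmul s d ^^ i) P) \<le> degree P + i"
proof (induction i)
  case 0 then show ?case by simp
next
  case (Suc i)
  show ?case
  proof (rule degree_le, intro allI impI)
    fix n assume "degree P + Suc i < n"
    then show "coeff ((dmul s d ^^ Suc i) P) n = 0"
      using Suc by (auto simp: coeff_dmul' coeff_eq_0 s0 d0)
  qed
qed

lemma coeff_dmul_pow_top: "coeff ((dmul s d ^^ i) P) (degree P + i) = (s ^^ i) (lead_coeff P)"
proof (induction i)
  case 0 then show ?case by simp
next
  case (Suc i)
  have "coeff ((dmul s d ^^ i) P) (degree P + Suc i) = 0"
    using degree_dmul_pow[of i P] by (intro coeff_eq_0) simp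
  then show ?case using Suc by (simp add: coeff_dmul' d0)
qed


lemma ore_mult_add_left: "ore_mult s d (A + A') B = ore_mult s d A B + ore_mult s d A' B"
proof -
  let ?N = "max (degree A) (degree A')"
  have "degree (A + A') \<le> ?N" by (rule degree_add_le) auto
  then show ?thesis
    by (simp add: ore_mult_bound[of _ ?N] smult_add_left sum.distrib)
qed

lemma ore_mult_zero_left: "ore_mult s d 0 B = 0"
  by (simp add: ore_mult_def)

lemma ore_mult_zero_right: "ore_mult s d A 0 = 0"
  by (simp add: ore_mult_def dmul_pow_0)

lemma ore_mult_smult_left: "ore_mult s d (smult c A) B = smult c (ore_mult s d A B)"
proof -
  have "degree (smult c A) \<le> degree A" by (rule degree_smult_le)
  then show ?thesis
    by (subst ore_mult_bound[OF \<open>degree (smult c A) \<le> degree A\<close>]) (simp add: ore_mult_def smult_sum_right)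
qed

lemma ore_mult_minus_left: "ore_mult s d (- A) B = - ore_mult s d A B"
  using ore_mult_smult_left[of "-1" A B] by simp

lemma ore_mult_diff_left: "ore_mult s d (A - A') B = ore_mult s d A B - ore_mult s d A' B"
  using ore_mult_add_left[of A "- A'" B] by (simp add: ore_mult_minus_left)

lemma ore_mult_sum_left: "ore_mult s d (sum f S) B = sum (\<lambda>i. ore_mult s d (f i) B) S"
  by (induction S rule: infinite_finite_induct) (auto simp: ore_mult_add_left ore_mult_zero_left)

lemma ore_mult_add_right: "ore_mult s d A (B + B') = ore_mult s d A B + ore_mult s d A B'"
  by (simp add: ore_mult_def dmul_pow_add smult_add_right sum.distrib)

lemma ore_mult_monom: "ore_mult s d (monom c i) B = smult c ((dmul s d ^^ i) B)"
proof -
  have "ore_mult s d (monom c i) B = (\<Sum>j\<le>i. smult (coeff (monom c i) j) ((dmul s d ^^ j) B))"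
    by (rule ore_mult_bound) (simp add: degree_monom_le)
  also have "\<dots> = (\<Sum>j\<le>i. if j = i then smult c ((dmul s d ^^ j) B) else 0)"
    by (rule sum.cong) (auto simp: coeff_monom)
  also have "\<dots> = smult c ((dmul s d ^^ i) B)" by simp
  finally show ?thesis .
qed

lemma ore_mult_one_left: "ore_mult s d 1 B = B"
  using ore_mult_monom[of 1 0 B] by (simp add: one_pCons monom_0)

lemma ore_mult_pCons0: "ore_mult s d (pCons 0 A) B = ore_mult s d A (dmul s d B)"
proof -
  have "degree (pCons 0 A) \<le> Suc (degree A)" by (simp add: degree_pCons_le)
  then have "ore_mult s d (pCons 0 A) B = (\<Sum>i\<le>Suc (degree A). smult (coeff (pCons 0 A) i) ((dmul s d ^^ i) B))"
    by (rule ore_mult_bound)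
  also have "\<dots> = (\<Sum>i\<le>degree A. smult (coeff A i) ((dmul s d ^^ Suc i) B))"
    by (subst sum.atMost_Suc_shift) simp
  also have "\<dots> = ore_mult s d A (dmul s d B)"
    by (simp add: ore_mult_def funpow_swap1)
  finally show ?thesis .
qed

lemma dmul_ore_mult: "dmul s d (ore_mult s d A B) = ore_mult s d (dmul s d A) B"
proof -
  have "dmul s d (ore_mult s d A B) =
      (\<Sum>i\<le>degree A. smult (s (coeff A i)) ((dmul s d ^^ Suc i) B) + smult (d (coeff A i)) ((dmul s d ^^ i) B))"
    by (simp add: ore_mult_def dmul_sum dmul_smult)
  also have "\<dots> = ore_mult s d (map_poly s A) (dmul s d B) + ore_mult s d (map_poly d A) B"
    by (simp add: sum.distrib ore_mult_bound[of _ "degree A"] degree_map_poly_le s0 d0 coeff_map_poly funpow_swap1)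
  also have "\<dots> = ore_mult s d (dmul s d A) B"
    by (simp add: dmul_def ore_mult_add_left ore_mult_pCons0)
  finally show ?thesis .
qed

lemma ore_mult_dmul_pow: "ore_mult s d ((dmul s d ^^ i) A) B = (dmul s d ^^ i) (ore_mult s d A B)"
  by (induction i) (auto simp: dmul_ore_mult[symmetric])

lemma ore_mult_assoc: "ore_mult s d (ore_mult s d A B) C = ore_mult s d A (ore_mult s d B C)"
  by (simp add: ore_mult_def[of s d A B] ore_mult_sum_left ore_mult_smult_left ore_mult_dmul_pow)
     (simp add: ore_mult_def)

lemma degree_ore_mult_le: "degree (ore_mult s d A B) \<le> degree A + degree B"
  unfolding ore_mult_def
proof (rule degree_sum_le)
  fix i assume "i \<in> {..degree A}"
  then show "degree (smult (coeff A i) ((dmul s d ^^ i) B)) \<le> degree A + degree B"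
    using degree_dmul_pow[of i B] degree_smult_le[of "coeff A i" "(dmul s d ^^ i) B"] by auto
qed simp

lemma coeff_ore_mult_top:
  "coeff (ore_mult s d A B) (degree A + degree B) = lead_coeff A * (s ^^ degree A) (lead_coeff B)"
proof -
  have "coeff (ore_mult s d A B) (degree A + degree B)
      = (\<Sum>i<Suc (degree A). coeff A i * coeff ((dmul s d ^^ i) B) (degree A + degree B))"
    by (simp add: ore_mult_def coeff_sum lessThan_Suc_atMost)
  also have "\<dots> = coeff A (degree A) * coeff ((dmul s d ^^ degree A) B) (degree A + degree B)
      + (\<Sum>i<degree A. coeff A i * coeff ((dmul s d ^^ i) B) (degree A + degree B))"
    by simp
  also have "(\<Sum>i<degree A. coeff A i * coeff ((dmul s d ^^ i) B) (degree A + degree B)) = 0"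
  proof (rule sum.neutral, intro ballI)
    fix i assume "i \<in> {..<degree A}"
    then have "coeff ((dmul s d ^^ i) B) (degree A + degree B) = 0"
      using degree_dmul_pow[of i B] by (intro coeff_eq_0) auto
    then show "coeff A i * coeff ((dmul s d ^^ i) B) (degree A + degree B) = 0" by simp
  qed
  finally show ?thesis using coeff_dmul_pow_top[of "degree A" B] by (simp add: add.commute)
qed

lemma ore_mult_monom_degree: "degree (ore_mult s d (monom c j) T) \<le> degree T + j"
  using ore_mult_monom[of c j T] degree_dmul_pow[of j T] degree_smult_le[of c "(dmul s d ^^ j) T"] by auto

lemma ore_mult_monom_coeff: "coeff (ore_mult s d (monom c j) T) (degree T + j) = c * (s ^^ j) (lead_coeff T)"
  by (simp add: ore_mult_monom coeff_dmul_pow_top)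

end

lemma dmul_hom:
  assumes "\<And>a b. f (a + b) = f a + f b" "f 0 = 0" "\<And>x. f (s1 x) = s2 (f x)" "\<And>x. f (d1 x) = d2 (f x)"
    "s1 0 = 0" "d1 0 = 0" "s2 0 = 0" "d2 0 = 0"
  shows "map_poly f (dmul s1 d1 P) = dmul s2 d2 (map_poly f P)"
  by (intro poly_eqI) (simp add: coeff_dmul assms coeff_map_poly)

lemma dmul_pow_hom:
  assumes "\<And>a b. f (a + b) = f a + f b" "f 0 = 0" "\<And>x. f (s1 x) = s2 (f x)" "\<And>x. f (d1 x) = d2 (f x)"
    "s1 0 = 0" "d1 0 = 0" "s2 0 = 0" "d2 0 = 0"
  shows "map_poly f ((dmul s1 d1 ^^ i) P) = (dmul s2 d2 ^^ i) (map_poly f P)"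
  by (induction i) (auto simp: dmul_hom[OF assms])

lemma ore_mult_hom:
  assumes "\<And>a b. f (a + b) = f a + f b" "f 0 = 0" "\<And>x. f (s1 x) = s2 (f x)" "\<And>x. f (d1 x) = d2 (f x)"
    "s1 0 = 0" "d1 0 = 0" "s2 0 = 0" "d2 0 = 0" "\<And>a b. f (a * b) = f a * f b"
  shows "map_poly f (ore_mult s1 d1 A B) = ore_mult s2 d2 (map_poly f A) (map_poly f B)"
proof -
  have "map_poly f (ore_mult s1 d1 A B) = (\<Sum>i\<le>degree A. smult (f (coeff A i)) ((dmul s2 d2 ^^ i) (map_poly f B)))"
    unfolding ore_mult_def
    by (simp add: map_poly_sum_gen[OF assms(1,2)] map_poly_smult assms(2,9) dmul_pow_hom[OF assms(1-8)])
  also have "\<dots> = ore_mult s2 d2 (map_poly f A) (map_poly f B)"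
    by (subst ore_mult_bound[OF degree_map_poly_le[of f, OF assms(2)]]) (simp add: coeff_map_poly assms(2))
  finally show ?thesis .
qed

lemma dvd_coeffs_smult:
  fixes f :: "'a::idom poly"
  assumes "\<forall>i. r dvd coeff f i" shows "\<exists>h. f = smult r h"
  using assms
proof (induction f)
  case 0 then show ?case by (intro exI[of _ 0]) simp
next
  case (pCons a f)
  from pCons.prems have "r dvd a" by (metis coeff_pCons_0)
  from pCons.prems have "\<forall>i. r dvd coeff f i" by (metis coeff_pCons_Suc)
  then obtain h where "f = smult r h" using pCons.IH by blast
  moreover obtain a' where "a = r * a'" using \<open>r dvd a\<close> by blast
  ultimately show ?case by (intro exI[of _ "pCons a' h"]) simp
qed

lemma pid_coeff_gen:
  fixes f :: "'a::idom poly"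
  assumes "pid TYPE('a)"
  shows "\<exists>g0 \<rho>. g0 = (\<Sum>i\<le>degree f. \<rho> i * coeff f i) \<and> (\<forall>i. g0 dvd coeff f i)"
proof -
  define I where "I = {x. \<exists>\<rho>. x = (\<Sum>i\<le>degree f. \<rho> i * coeff f i)}"
  have "0 \<in> I" unfolding I_def by (intro CollectI exI[of _ "\<lambda>_. 0"]) simp
  moreover have "\<forall>x\<in>I. \<forall>y\<in>I. x + y \<in> I"
  proof (intro ballI)
    fix x y assume "x \<in> I" "y \<in> I"
    then obtain \<rho>1 \<rho>2 where "x = (\<Sum>i\<le>degree f. \<rho>1 i * coeff f i)" "y = (\<Sum>i\<le>degree f. \<rho>2 i * coeff f i)"
      unfolding I_def by blast
    then show "x + y \<in> I" unfolding I_def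
      by (intro CollectI exI[of _ "\<lambda>i. \<rho>1 i + \<rho>2 i"]) (simp add: sum.distrib distrib_right)
  qed
  moreover have "\<forall>r x. x \<in> I \<longrightarrow> r * x \<in> I"
  proof (intro allI impI)
    fix r x assume "x \<in> I"
    then obtain \<rho> where "x = (\<Sum>i\<le>degree f. \<rho> i * coeff f i)" unfolding I_def by blast
    then show "r * x \<in> I" unfolding I_def
      by (intro CollectI exI[of _ "\<lambda>i. r * \<rho> i"]) (simp add: sum_distrib_left mult.assoc)
  qed
  ultimately obtain g where g: "I = {r * g | r. True}" using assms unfolding pid_def by blast
  have "g \<in> I" using g by (auto intro!: exI[of _ 1])
  then obtain \<rho> where \<rho>: "g = (\<Sum>i\<le>degree f. \<rho> i * coeff f i)" unfolding I_def by blast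
  have "\<forall>i. g dvd coeff f i"
  proof
    fix j
    have "coeff f j \<in> I"
    proof (cases "j \<le> degree f")
      case True
      have "(\<Sum>i\<le>degree f. (if i = j then 1 else 0) * coeff f i) = (\<Sum>i\<le>degree f. if i = j then coeff f i else 0)"
        by (rule sum.cong) auto
      also have "\<dots> = coeff f j" using True by simp
      finally show ?thesis unfolding I_def by (intro CollectI exI[of _ "\<lambda>i. if i = j then 1 else 0"]) simp
    next
      case False
      then have "coeff f j = 0" by (intro coeff_eq_0) simp
      then show ?thesis using \<open>0 \<in> I\<close> by simp
    qed
    then obtain r where "coeff f j = r * g" using g by auto
    then show "g dvd coeff f j" by simp
  qed
  with \<rho> show ?thesis by blast
qed

lemma primitive_nonzero: "primitive (f::'a::idom poly) \<Longrightarrow> f \<noteq> 0"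
proof
  assume "primitive f" "f = 0"
  then have "(0::'a) dvd 1" unfolding primitive_def by simp
  then show False by simp
qed

lemma content_exists:
  fixes f :: "'a::idom poly"
  assumes "pid TYPE('a)" "f \<noteq> 0"
  shows "\<exists>c f0. f = smult c f0 \<and> primitive f0 \<and> c \<noteq> 0"
proof -
  obtain g \<rho> where g: "g = (\<Sum>i\<le>degree f. \<rho> i * coeff f i)" "\<forall>i. g dvd coeff f i"
    using pid_coeff_gen[OF assms(1)] by blast
  obtain f0 where f0: "f = smult g f0" using dvd_coeffs_smult[OF g(2)] by blast
  have "g \<noteq> 0" using f0 assms(2) by auto
  have "primitive f0" unfolding primitive_def
  proof (intro allI impI)
    fix e assume e: "\<forall>i. e dvd coeff f0 i"
    have "\<forall>i. g * e dvd coeff f i" using e f0 by (simp add: mult_dvd_mono)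
    then have "g * e dvd (\<Sum>i\<le>degree f. \<rho> i * coeff f i)" by (intro dvd_sum) (simp add: dvd_mult)
    then have "g * e dvd g * 1" using g(1) by simp
    then show "e dvd 1" using \<open>g \<noteq> 0\<close> by simp
  qed
  with f0 \<open>g \<noteq> 0\<close> show ?thesis by blast
qed

lemma primitive_bezout:
  fixes f :: "'a::idom poly"
  assumes "pid TYPE('a)" "primitive f" "\<forall>i. r dvd c * coeff f i"
  shows "r dvd c"
proof -
  obtain g \<rho> where g: "g = (\<Sum>i\<le>degree f. \<rho> i * coeff f i)" "\<forall>i. g dvd coeff f i"
    using pid_coeff_gen[OF assms(1)] by blast
  have "g dvd 1" using g(2) assms(2) unfolding primitive_def by blast
  have "r dvd (\<Sum>i\<le>degree f. \<rho> i * (c * coeff f i))" using assms(3) by (intro dvd_sum) (simp add: dvd_mult)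
  also have "(\<Sum>i\<le>degree f. \<rho> i * (c * coeff f i)) = c * g"
    using g(1) by (simp add: sum_distrib_left ac_simps)
  finally have "r dvd c * g" .
  obtain u where "1 = g * u" using \<open>g dvd 1\<close> by blast
  then have "c = c * g * u" by (simp add: mult.assoc)
  with \<open>r dvd c * g\<close> show ?thesis by (metis dvd_mult2)
qed

lemma primitive_const_dvd: "primitive p \<Longrightarrow> [:r:] dvd p \<Longrightarrow> r dvd 1"
proof -
  assume "primitive p" "[:r:] dvd p"
  then obtain q where "p = [:r:] * q" by blast
  then have "\<forall>i. r dvd coeff p i" by simp
  with \<open>primitive p\<close> show ?thesis unfolding primitive_def by blast
qed

lemma pid_prime_divisor:
  fixes e :: "'a::idom"
  assumes "pid TYPE('a)" "e \<noteq> 0" "\<not> e dvd 1"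
  shows "\<exists>\<pi>. prime_elem \<pi> \<and> \<pi> dvd e"
proof -
  define idl where "idl = (\<lambda>I::'a set. 0 \<in> I \<and> (\<forall>x\<in>I. \<forall>y\<in>I. x + y \<in> I) \<and> (\<forall>r x. x \<in> I \<longrightarrow> r * x \<in> I))"
  define A where "A = {I. idl I \<and> e \<in> I \<and> 1 \<notin> I}"
  have pr: "idl {r * x | r. True}" for x
  proof -
    have "0 \<in> {r * x | r. True}" by (rule CollectI, rule exI[of _ 0]) simp
    moreover have "\<forall>a\<in>{r * x | r. True}. \<forall>b\<in>{r * x | r. True}. a + b \<in> {r * x | r. True}"
    proof (intro ballI)
      fix a b assume "a \<in> {r * x | r. True}" "b \<in> {r * x | r. True}"
      then obtain r1 r2 where "a = r1 * x" "b = r2 * x" by blast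
      then have "a + b = (r1 + r2) * x" by (simp add: distrib_right)
      then show "a + b \<in> {r * x | r. True}" by blast
    qed
    moreover have "\<forall>t a. a \<in> {r * x | r. True} \<longrightarrow> t * a \<in> {r * x | r. True}"
    proof (intro allI impI)
      fix t a assume "a \<in> {r * x | r. True}"
      then obtain r1 where "a = r1 * x" by blast
      then have "t * a = (t * r1) * x" by (simp add: mult.assoc)
      then show "t * a \<in> {r * x | r. True}" by blast
    qed
    ultimately show ?thesis unfolding idl_def by blast
  qed
  have eA: "{r * e | r. True} \<in> A"
  proof -
    have "e \<in> {r * e | r. True}" by (rule CollectI, rule exI[of _ 1]) simp
    moreover have "1 \<notin> {r * e | r. True}"
    proof
      assume "1 \<in> {r * e | r. True}"
      then obtain r where "1 = r * e" by blast
      then have "e dvd 1" by (metis dvd_triv_right)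
      with assms(3) show False by simp
    qed
    ultimately show ?thesis using pr[of e] unfolding A_def by blast
  qed
  have "\<forall>C\<in>chains A. \<exists>U\<in>A. \<forall>X\<in>C. X \<subseteq> U"
  proof
    fix C assume C: "C \<in> chains A"
    show "\<exists>U\<in>A. \<forall>X\<in>C. X \<subseteq> U"
    proof (cases "C = {}")
      case True then show ?thesis using eA by blast
    next
      case False
      have CA: "C \<subseteq> A" and ch: "\<forall>X\<in>C. \<forall>Y\<in>C. X \<subseteq> Y \<or> Y \<subseteq> X"
        using C unfolding chains_def chain_subset_def by auto
      have "\<Union>C \<in> A"
        unfolding A_def idl_def
      proof (intro CollectI conjI)
        show "0 \<in> \<Union>C" using False CA unfolding A_def idl_def by blast
        show "e \<in> \<Union>C" using False CA unfolding A_def by blast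
        show "1 \<notin> \<Union>C" using CA unfolding A_def by blast
        show "\<forall>r x. x \<in> \<Union>C \<longrightarrow> r * x \<in> \<Union>C" using CA unfolding A_def idl_def by blast
        show "\<forall>x\<in>\<Union>C. \<forall>y\<in>\<Union>C. x + y \<in> \<Union>C"
        proof (intro ballI)
          fix x y assume "x \<in> \<Union>C" "y \<in> \<Union>C"
          then obtain X Y where XY: "X \<in> C" "Y \<in> C" "x \<in> X" "y \<in> Y" by blast
          then have "X \<subseteq> Y \<or> Y \<subseteq> X" using ch by blast
          then show "x + y \<in> \<Union>C"
          proof
            assume "X \<subseteq> Y"
            then have "x + y \<in> Y" using XY CA unfolding A_def idl_def by blast
            then show ?thesis using XY by blast
          next
            assume "Y \<subseteq> X"
            then have "x + y \<in> X" using XY CA unfolding A_def idl_def by blast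
            then show ?thesis using XY by blast
          qed
        qed
      qed
      then show ?thesis by blast
    qed
  qed
  from Zorn_Lemma2[OF this] obtain M where M: "M \<in> A" and Mmax: "\<forall>X\<in>A. M \<subseteq> X \<longrightarrow> X = M" by blast
  have Mi: "idl M" "e \<in> M" "1 \<notin> M" using M unfolding A_def by auto
  have pidM: "(0 \<in> M \<and> (\<forall>x\<in>M. \<forall>y\<in>M. x + y \<in> M) \<and> (\<forall>r x. x \<in> M \<longrightarrow> r * x \<in> M))
                 \<longrightarrow> (\<exists>g. M = {r * g | r. True})"
    using assms(1) unfolding pid_def by (rule spec)
  have "0 \<in> M \<and> (\<forall>x\<in>M. \<forall>y\<in>M. x + y \<in> M) \<and> (\<forall>r x. x \<in> M \<longrightarrow> r * x \<in> M)"
    using Mi(1) unfolding idl_def .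
  with pidM obtain \<pi> where \<pi>: "M = {r * \<pi> | r. True}" by blast
  have "\<pi> dvd e" using Mi(2) \<pi> by auto
  moreover have "prime_elem \<pi>"
  proof (rule prime_elemI)
    show "\<pi> \<noteq> 0" using Mi(2) \<pi> assms(2) by auto
    show "\<not> \<pi> dvd 1"
    proof
      assume "\<pi> dvd 1"
      then obtain u where "1 = \<pi> * u" by blast
      then have "1 = u * \<pi>" by (simp add: mult.commute)
      then have "1 \<in> M" using \<pi> by blast
      with Mi show False by simp
    qed
    fix a b assume ab: "\<pi> dvd a * b"
    show "\<pi> dvd a \<or> \<pi> dvd b"
    proof (cases "\<pi> dvd a")
      case True then show ?thesis by simp
    next
      case False
      note na = False
      define J where "J = {r * \<pi> + t * a | r t. True}"
      have "idl J" unfolding idl_def J_def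
      proof (intro conjI)
        have "(0::'a) = 0 * \<pi> + 0 * a" by simp
        then show "0 \<in> {r * \<pi> + t * a |r t. True}" by blast
        show "\<forall>x\<in>{r * \<pi> + t * a |r t. True}. \<forall>y\<in>{r * \<pi> + t * a |r t. True}. x + y \<in> {r * \<pi> + t * a |r t. True}"
        proof (intro ballI)
          fix x y assume "x \<in> {r * \<pi> + t * a |r t. True}" "y \<in> {r * \<pi> + t * a |r t. True}"
          then obtain r1 t1 r2 t2 where "x = r1 * \<pi> + t1 * a" "y = r2 * \<pi> + t2 * a" by blast
          then have "x + y = (r1 + r2) * \<pi> + (t1 + t2) * a" by (simp add: algebra_simps)
          then show "x + y \<in> {r * \<pi> + t * a |r t. True}" by blast
        qed
        show "\<forall>s x. x \<in> {r * \<pi> + t * a |r t. True} \<longrightarrow> s * x \<in> {r * \<pi> + t * a |r t. True}"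
        proof (intro allI impI)
          fix s x assume "x \<in> {r * \<pi> + t * a |r t. True}"
          then obtain r1 t1 where "x = r1 * \<pi> + t1 * a" by blast
          then have "s * x = (s * r1) * \<pi> + (s * t1) * a" by (simp add: algebra_simps)
          then show "s * x \<in> {r * \<pi> + t * a |r t. True}" by blast
        qed
      qed
      have MJ: "M \<subseteq> J"
      proof
        fix x assume "x \<in> M"
        then obtain r where "x = r * \<pi>" using \<pi> by blast
        then have "x = r * \<pi> + 0 * a" by simp
        then show "x \<in> J" unfolding J_def by blast
      qed
      have "a = 0 * \<pi> + 1 * a" by simp
      then have aJ: "a \<in> J" unfolding J_def by blast
      have "1 \<in> J"
      proof (rule ccontr)
        assume "1 \<notin> J"
        then have "J \<in> A" using \<open>idl J\<close> MJ Mi(2) unfolding A_def by blast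
        then have "J = M" using Mmax MJ by blast
        then have "a \<in> M" using aJ by simp
        then show False using na \<pi> by auto
      qed
      then obtain r t where "1 = r * \<pi> + t * a" unfolding J_def by blast
      then have "b = (r * \<pi> + t * a) * b" by simp
      then have "b = r * \<pi> * b + t * (a * b)" by (simp add: algebra_simps)
      moreover have "\<pi> dvd r * \<pi> * b + t * (a * b)" using ab by (simp add: dvd_add)
      ultimately have "\<pi> dvd b" by metis
      then show ?thesis by simp
    qed
  qed
  ultimately show ?thesis by blast
qed

lemma gauss_primitive:
  fixes f g :: "'a::idom poly"
  assumes "pid TYPE('a)" "primitive f" "primitive g"
  shows "primitive (f * g)"
  unfolding primitive_def
proof (intro allI impI, rule ccontr)
  fix e assume e: "\<forall>i. e dvd coeff (f * g) i" and ne: "\<not> e dvd 1"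
  have "f * g \<noteq> 0" using primitive_nonzero assms by auto
  have "e \<noteq> 0"
  proof
    assume "e = 0"
    then have "f * g = 0" using e by (intro poly_eqI) simp
    with \<open>f * g \<noteq> 0\<close> show False by simp
  qed
  obtain \<pi> where \<pi>: "prime_elem \<pi>" "\<pi> dvd e" using pid_prime_divisor[OF assms(1) \<open>e \<noteq> 0\<close> ne] by blast
  have nu: "\<not> \<pi> dvd 1" using \<pi>(1) by (rule prime_elem_not_unit)
  have exf: "\<exists>i. \<not> \<pi> dvd coeff f i" using assms(2) nu unfolding primitive_def by blast
  have exg: "\<exists>i. \<not> \<pi> dvd coeff g i" using assms(3) nu unfolding primitive_def by blast
  define i where "i = (LEAST i. \<not> \<pi> dvd coeff f i)"
  define j where "j = (LEAST i. \<not> \<pi> dvd coeff g i)"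
  have fi: "\<not> \<pi> dvd coeff f i" unfolding i_def using exf by (rule LeastI_ex)
  have gj: "\<not> \<pi> dvd coeff g j" unfolding j_def using exg by (rule LeastI_ex)
  have fa: "\<pi> dvd coeff f a" if "a < i" for a using that not_less_Least unfolding i_def by blast
  have gb: "\<pi> dvd coeff g b" if "b < j" for b using that not_less_Least unfolding j_def by blast
  have "\<pi> dvd coeff (f * g) (i + j)" using e \<pi>(2) dvd_trans by blast
  also have "coeff (f * g) (i + j) = coeff f i * coeff g j + (\<Sum>a\<in>{..i+j}-{i}. coeff f a * coeff g (i + j - a))"
    unfolding coeff_mult by (subst sum.remove[where x=i]) auto
  finally have 1: "\<pi> dvd coeff f i * coeff g j + (\<Sum>a\<in>{..i+j}-{i}. coeff f a * coeff g (i + j - a))" .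
  have "\<pi> dvd (\<Sum>a\<in>{..i+j}-{i}. coeff f a * coeff g (i + j - a))"
  proof (rule dvd_sum)
    fix a assume a: "a \<in> {..i+j}-{i}"
    show "\<pi> dvd coeff f a * coeff g (i + j - a)"
    proof (cases "a < i")
      case True then show ?thesis using fa by (simp add: dvd_mult2)
    next
      case False
      then have "i + j - a < j" using a by auto
      then show ?thesis using gb by (simp add: dvd_mult)
    qed
  qed
  with 1 have "\<pi> dvd coeff f i * coeff g j" by (simp add: dvd_add_left_iff)
  then show False using \<pi>(1) fi gj by (simp add: prime_elem_dvd_mult_iff)
qed

lemma primitive_one: "primitive (1::'a::idom poly)"
  unfolding primitive_def
proof (intro allI impI)
  fix c :: 'a assume "\<forall>i. c dvd coeff 1 i"
  then have "c dvd coeff 1 0" by blast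
  then show "c dvd 1" by simp
qed

lemma primitive_power:
  assumes "pid TYPE('a)" "primitive (p::'a::idom poly)"
  shows "primitive (p ^ n)"
proof (induction n)
  case 0 then show ?case by (simp add: primitive_one)
next
  case (Suc n) then show ?case using gauss_primitive[OF assms(1) assms(2) Suc] by simp
qed

instantiation fract :: (idom)
  "{unique_euclidean_ring, normalization_euclidean_semiring, normalization_semidom_multiplicative}"
begin
definition [simp]: "normalize_fract = (normalize_field :: 'a fract \<Rightarrow> _)"
definition [simp]: "unit_factor_fract = (unit_factor_field :: 'a fract \<Rightarrow> _)"
definition [simp]: "modulo_fract = (mod_field :: 'a fract \<Rightarrow> _)"
definition [simp]: "euclidean_size_fract = (euclidean_size_field :: 'a fract \<Rightarrow> _)"
definition [simp]: "division_segment (x :: 'a fract) = 1"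
instance
  by standard
    (simp_all add: dvd_field_iff field_split_simps split: if_splits)
end

instantiation fract :: (idom) euclidean_ring_gcd
begin
definition gcd_fract :: "'a fract \<Rightarrow> 'a fract \<Rightarrow> 'a fract" where
  "gcd_fract = Euclidean_Algorithm.gcd"
definition lcm_fract :: "'a fract \<Rightarrow> 'a fract \<Rightarrow> 'a fract" where
  "lcm_fract = Euclidean_Algorithm.lcm"
definition Gcd_fract :: "'a fract set \<Rightarrow> 'a fract" where
 "Gcd_fract = Euclidean_Algorithm.Gcd"
definition Lcm_fract :: "'a fract set \<Rightarrow> 'a fract" where
 "Lcm_fract = Euclidean_Algorithm.Lcm"
instance by standard (simp_all add: gcd_fract_def lcm_fract_def Gcd_fract_def Lcm_fract_def)
end

instance fract :: (idom) field_gcd ..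

lemma fract_poly_pCons: "fract_poly (pCons a p) = pCons (to_fract a) (fract_poly p)"
  by (simp add: map_poly_pCons)

lemma degree_fract_poly: "degree (fract_poly p) = degree p"
  by (rule degree_map_poly) simp

lemma clear_denom:
  fixes H :: "'a::idom fract poly"
  shows "\<exists>d H1. d \<noteq> 0 \<and> smult (to_fract d) H = fract_poly H1"
proof (induction H)
  case 0 then show ?case by (intro exI[of _ 1] exI[of _ 0]) simp
next
  case (pCons x H)
  then obtain d H1 where dH: "d \<noteq> 0" "smult (to_fract d) H = fract_poly H1" by blast
  obtain n m where x: "x = Fract n m" "m \<noteq> 0" by (cases x)
  have 1: "to_fract (d * m) * x = to_fract (d * n)"
    using x by (simp add: Fract_conv_to_fract)
  have 2: "smult (to_fract (d * m)) H = fract_poly (smult m H1)"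
    using dH(2) by (simp add: mult.commute[of "to_fract d"] smult_smult[symmetric])
  have "smult (to_fract (d * m)) (pCons x H) = fract_poly (pCons (d * n) (smult m H1))"
    by (simp only: smult_pCons 1 2 fract_poly_pCons)
  moreover have "d * m \<noteq> 0" using dH x by simp
  ultimately show ?case by blast
qed

lemma gauss_div:
  fixes p f :: "'a::idom poly"
  assumes pid: "pid TYPE('a)" and pr: "primitive p" and dv: "fract_poly p dvd fract_poly f"
  shows "p dvd f"
proof (cases "f = 0")
  case True then show ?thesis by simp
next
  case False
  obtain H where H: "fract_poly f = fract_poly p * H" using dv by blast
  obtain d H1 where dH: "d \<noteq> 0" "smult (to_fract d) H = fract_poly H1" using clear_denom by blast
  have "fract_poly (smult d f) = fract_poly (p * H1)"
    using H dH(2) by (simp add: mult_smult_right[symmetric])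
  then have e1: "smult d f = p * H1" by (simp only: fract_poly_eq_iff)
  have "H1 \<noteq> 0" using e1 dH(1) False by auto
  obtain c H0 where cH: "H1 = smult c H0" "primitive H0" "c \<noteq> 0" using content_exists[OF pid \<open>H1 \<noteq> 0\<close>] by blast
  have pp: "primitive (p * H0)" using gauss_primitive[OF pid pr cH(2)] .
  have e2: "smult d f = smult c (p * H0)" using e1 cH(1) by simp
  have "\<forall>i. d dvd c * coeff (p * H0) i"
  proof
    fix i
    have "coeff (smult d f) i = coeff (smult c (p * H0)) i" using e2 by simp
    then have "d * coeff f i = c * coeff (p * H0) i" by simp
    then show "d dvd c * coeff (p * H0) i" by (metis dvd_triv_left)
  qed
  then have "d dvd c" using primitive_bezout[OF pid pp] by blast
  then obtain e where "c = d * e" by blast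
  then have "smult d f = smult d (smult e (p * H0))" using e2 by simp
  then have "f = smult e (p * H0)" using smult_cancel[OF dH(1)] by blast
  then have "f = p * smult e H0" by simp
  then show ?thesis by (rule dvdI)
qed

lemma field_poly_unit_iff: "is_unit (A :: 'b::field poly) \<longleftrightarrow> A \<noteq> 0 \<and> degree A = 0"
  by (cases "A = 0") (auto simp: is_unit_iff_degree)

lemma irreducible_poly_primitive:
  fixes p :: "'a::idom poly"
  assumes "irreducible p" "degree p > 0"
  shows "primitive p"
  unfolding primitive_def
proof (intro allI impI)
  fix e assume e: "\<forall>i. e dvd coeff p i"
  obtain h where h: "p = smult e h" using dvd_coeffs_smult[OF e] by blast
  then have "p = [:e:] * h" by simp
  then have "[:e:] dvd 1 \<or> h dvd 1" by (rule irreducibleD[OF assms(1)])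
  moreover have "\<not> h dvd 1"
  proof
    assume "h dvd 1"
    then obtain c where "h = [:c:]" by (auto simp: is_unit_poly_iff)
    then have "degree p = 0" using h by simp
    with assms(2) show False by simp
  qed
  ultimately show "e dvd 1" by (simp add: is_unit_const_poly_iff)
qed

lemma irreducible_fract:
  fixes p :: "'a::idom poly"
  assumes pid: "pid TYPE('a)" and irr: "irreducible p" and deg: "degree p > 0"
  shows "irreducible (fract_poly p)"
proof (rule irreducibleI)
  show "fract_poly p \<noteq> 0" using deg by auto
  show "\<not> is_unit (fract_poly p)" using deg by (simp add: field_poly_unit_iff degree_fract_poly)
  fix A B assume AB: "fract_poly p = A * B"
  show "is_unit A \<or> is_unit B"
  proof (rule ccontr)
    assume nu: "\<not> (is_unit A \<or> is_unit B)"
    have "A \<noteq> 0" "B \<noteq> 0" using AB \<open>fract_poly p \<noteq> 0\<close> by auto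
    then have dA: "degree A > 0" and dB: "degree B > 0" using nu by (auto simp: field_poly_unit_iff)
    obtain d A1 where dA1: "d \<noteq> 0" "smult (to_fract d) A = fract_poly A1" using clear_denom by blast
    have "A1 \<noteq> 0" using dA1 \<open>A \<noteq> 0\<close> by (metis fract_poly_0 smult_eq_0_iff to_fract_eq_0_iff)
    obtain c A0 where cA: "A1 = smult c A0" "primitive A0" "c \<noteq> 0" using content_exists[OF pid \<open>A1 \<noteq> 0\<close>] by blast
    have eA: "A = smult (to_fract c / to_fract d) (fract_poly A0)"
    proof -
      have "smult (to_fract d) A = smult (to_fract d) (smult (to_fract c / to_fract d) (fract_poly A0))"
        using dA1(2) cA(1) dA1(1) by simp
      then show ?thesis using smult_cancel[of "to_fract d"] dA1(1) by simp
    qed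
    have "fract_poly A0 dvd A"
      using eA cA(3) by (metis dvd_triv_right mult_smult_left smult_dvd_iff dvd_refl)
    also have "A dvd fract_poly p" using AB by simp
    finally have "A0 dvd p" using gauss_div[OF pid cA(2)] by blast
    then obtain C where C: "p = A0 * C" by blast
    have degA0: "degree A0 = degree A" using eA cA(3) dA1(1) by (simp add: degree_fract_poly)
    from C have "A0 dvd 1 \<or> C dvd 1" by (rule irreducibleD[OF irr])
    then show False
    proof
      assume "A0 dvd 1"
      then have "degree A0 = 0" by (auto simp: is_unit_poly_iff)
      with degA0 dA show False by simp
    next
      assume "C dvd 1"
      then have "degree C = 0" by (auto simp: is_unit_poly_iff)
      have "A0 \<noteq> 0" "C \<noteq> 0" using C \<open>fract_poly p \<noteq> 0\<close> by auto
      then have "degree p = degree A0" using C \<open>degree C = 0\<close> by (simp add: degree_mult_eq)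
      moreover have "degree p = degree A + degree B"
        using AB \<open>A \<noteq> 0\<close> \<open>B \<noteq> 0\<close> by (metis degree_fract_poly degree_mult_eq)
      ultimately show False using degA0 dB by simp
    qed
  qed
qed

lemma fract_poly_prod: "fract_poly (prod f A) = prod (\<lambda>i. fract_poly (f i)) A"
  by (induction A rule: infinite_finite_induct) auto

lemma fract_poly_power: "fract_poly (p ^ n) = (fract_poly p) ^ n"
  by (induction n) auto

lemma mult_unit_dvd_swap:
  fixes q u :: "'b::comm_ring_1"
  assumes "u dvd 1"
  shows "q * u dvd q"
proof -
  obtain v where "1 = u * v" using assms by blast
  then have "q = q * u * v" by (simp add: mult.assoc)
  then show ?thesis by (metis dvd_triv_left)
qed

lemma key_alg:
  fixes lcL W g' :: "'a::idom poly" and ps :: "'a poly list"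
  assumes pid: "pid TYPE('a)"
    and lcL0: "lcL \<noteq> 0"
    and fac: "lcL = [:c:] * (\<Prod>i<length ps. (ps!i) ^ (es!i))"
    and irr: "\<forall>i<length ps. irreducible (ps!i) \<and> degree (ps!i) > 0"
    and lcg: "fract_poly ((\<Prod>i<length ps. (ps!i) ^ (ks!i)) * g') dvd fract_poly lcL"
    and prg: "primitive g'"
    and W0: "W \<noteq> 0"
    and NR: "\<forall>i<length ps. \<forall>dd > ks!i. \<forall>w v. v \<noteq> 0 \<longrightarrow> coprime_r ((ps!i)^dd) w \<longrightarrow>
               (ps!i)^dd dvd lcL \<longrightarrow> W * v * (ps!i)^dd = w * lcL \<longrightarrow> False"
  shows "g' dvd W"
proof -
  have fW0: "fract_poly W \<noteq> 0" using W0 by simp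
  have flcL0: "fract_poly lcL \<noteq> 0" using lcL0 by simp
  have "fract_poly g' dvd fract_poly ((\<Prod>i<length ps. (ps!i) ^ (ks!i)) * g')"
    by (simp only: fract_poly_mult) (rule dvd_triv_right)
  then have gdl: "fract_poly g' dvd fract_poly lcL" using lcg by (rule dvd_trans)
  have main: "multiplicity (fract_poly (ps!i)) (fract_poly g') \<le> multiplicity (fract_poly (ps!i)) (fract_poly W)"
    if i: "i < length ps" for i
  proof (rule ccontr)
    define p where "p = ps ! i"
    define \<pi> where "\<pi> = fract_poly p"
    define t where "t = multiplicity \<pi> (fract_poly W)"
    define m' where "m' = multiplicity \<pi> (fract_poly g')"
    define e where "e = multiplicity \<pi> (fract_poly lcL)"
    assume "\<not> multiplicity (fract_poly (ps!i)) (fract_poly g') \<le> multiplicity (fract_poly (ps!i)) (fract_poly W)"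
    then have tm: "t < m'" unfolding t_def m'_def \<pi>_def p_def by simp
    have irrp: "irreducible p" "degree p > 0" using irr i unfolding p_def by auto
    have primp: "primitive p" using irreducible_poly_primitive[OF irrp] .
    have irrpi: "irreducible \<pi>" unfolding \<pi>_def using irreducible_fract[OF pid irrp] .
    have nupi: "\<not> is_unit \<pi>" using irrpi by (simp add: irreducible_def)
    have "\<pi> ^ e dvd fract_poly lcL" unfolding e_def by (rule multiplicity_dvd)
    then have "fract_poly (p ^ e) dvd fract_poly lcL" by (simp add: fract_poly_power \<pi>_def)
    then have "p ^ e dvd lcL" using gauss_div[OF pid primitive_power[OF pid primp]] by blast
    then obtain M where M: "lcL = p ^ e * M" by blast
    have "\<pi> ^ t dvd fract_poly W" unfolding t_def by (rule multiplicity_dvd)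
    then have "fract_poly (p ^ t) dvd fract_poly W" by (simp add: fract_poly_power \<pi>_def)
    then have "p ^ t dvd W" using gauss_div[OF pid primitive_power[OF pid primp]] by blast
    then obtain W' where W': "W = p ^ t * W'" by blast
    have M0: "M \<noteq> 0" using M lcL0 by auto
    have nW': "\<not> \<pi> dvd fract_poly W'"
    proof
      assume "\<pi> dvd fract_poly W'"
      then have "\<pi> ^ t * \<pi> dvd \<pi> ^ t * fract_poly W'" by (rule mult_dvd_mono[OF dvd_refl])
      then have dv: "\<pi> ^ Suc t dvd \<pi> ^ t * fract_poly W'" unfolding power_Suc2 .
      have eqW: "fract_poly W = \<pi> ^ t * fract_poly W'" unfolding W' \<pi>_def by (simp only: fract_poly_mult fract_poly_power)
      from dv have "\<pi> ^ Suc t dvd fract_poly W" unfolding eqW .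
      then have "Suc t \<le> multiplicity \<pi> (fract_poly W)" using power_dvd_iff_le_multiplicity[OF fW0 nupi] by blast
      then have "Suc t \<le> t" unfolding t_def .
      then show False by simp
    qed
    have ki: "ks ! i + m' \<le> e"
    proof -
      have "p ^ (ks!i) dvd (\<Prod>j<length ps. (ps!j) ^ (ks!j))" unfolding p_def using i by (intro dvd_prodI) auto
      then have "\<pi> ^ (ks!i) dvd fract_poly (\<Prod>j<length ps. (ps!j) ^ (ks!j))"
        unfolding \<pi>_def fract_poly_power[symmetric] by (rule fract_poly_dvd)
      moreover have "\<pi> ^ m' dvd fract_poly g'" unfolding m'_def by (rule multiplicity_dvd)
      ultimately have "\<pi> ^ (ks!i) * \<pi> ^ m' dvd fract_poly (\<Prod>j<length ps. (ps!j) ^ (ks!j)) * fract_poly g'"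
        by (rule mult_dvd_mono)
      also have "\<dots> dvd fract_poly lcL" using lcg by (simp only: fract_poly_mult)
      finally have "\<pi> ^ (ks!i + m') dvd fract_poly lcL" by (simp add: power_add)
      then show ?thesis unfolding e_def using power_dvd_iff_le_multiplicity[OF flcL0 nupi] by blast
    qed
    define dd where "dd = e - t"
    have dd: "dd > ks ! i" "t + dd = e" using tm ki unfolding dd_def by auto
    have cop: "coprime_r (p ^ dd) W'"
      unfolding coprime_r_def
    proof (intro allI impI)
      fix c' assume c1: "c' dvd p ^ dd" and c2: "c' dvd W'"
      have pd0: "p ^ dd \<noteq> 0" using irrp by auto
      then have "c' \<noteq> 0" using c1 by auto
      show "c' dvd 1"
      proof (cases "degree c' = 0")
        case True
        then obtain r where r: "c' = [:r:]" by (elim degree_eq_zeroE)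
        have "r dvd 1" using primitive_const_dvd[OF primitive_power[OF pid primp]] c1 r by blast
        then show ?thesis using r by (simp add: is_unit_const_poly_iff)
      next
        case False
        have "fract_poly c' \<noteq> 0" using \<open>c' \<noteq> 0\<close> by simp
        moreover have "\<not> is_unit (fract_poly c')" using False by (simp add: field_poly_unit_iff degree_fract_poly)
        ultimately obtain q' where q': "q' dvd fract_poly c'" "prime q'" using prime_divisor_exists by blast
        have "fract_poly c' dvd \<pi> ^ dd" using fract_poly_dvd[OF c1] by (simp add: fract_poly_power \<pi>_def)
        then have "q' dvd \<pi> ^ dd" using q'(1) dvd_trans by blast
        then have "q' dvd \<pi>" by (rule prime_elem_dvd_power[OF prime_imp_prime_elem[OF q'(2)]])
        then obtain u where u: "\<pi> = q' * u" by blast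
        have "\<not> is_unit q'" using q'(2) by (simp add: prime_elem_not_unit)
        then have "is_unit u" using irreducibleD[OF irrpi u] by blast
        then have "\<pi> dvd q'" using u mult_unit_dvd_swap[of u q'] by simp
        then have "\<pi> dvd fract_poly W'" using q'(1) fract_poly_dvd[OF c2] dvd_trans by blast
        with nW' show ?thesis by simp
      qed
    qed
    have pdl: "p ^ dd dvd lcL"
    proof -
      have "p ^ dd dvd p ^ e" using dd by (intro le_imp_power_dvd) auto
      then show ?thesis using M by (metis dvd_mult2)
    qed
    have eq: "W * M * p ^ dd = W' * lcL"
    proof -
      have "W * M * p ^ dd = W' * (p ^ t * p ^ dd * M)" using W' by (simp add: ac_simps)
      also have "p ^ t * p ^ dd = p ^ e" using dd(2) by (simp add: power_add[symmetric])
      finally show ?thesis using M by simp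
    qed
    have H: "\<And>w v. v \<noteq> 0 \<Longrightarrow> coprime_r (p^dd) w \<Longrightarrow> p^dd dvd lcL \<Longrightarrow> W * v * p^dd = w * lcL \<Longrightarrow> False"
      using NR i dd(1) unfolding p_def by blast
    show False by (rule H[OF M0 cop pdl eq])
  qed
  have "fract_poly g' dvd fract_poly W"
  proof (rule multiplicity_le_imp_dvd)
    show "fract_poly g' \<noteq> 0" using primitive_nonzero[OF prg] by simp
    fix q :: "'a fract poly" assume q: "prime q"
    show "multiplicity q (fract_poly g') \<le> multiplicity q (fract_poly W)"
    proof (cases "q dvd fract_poly lcL")
      case False
      then have "\<not> q dvd fract_poly g'" using gdl dvd_trans by blast
      then show ?thesis by (simp add: not_dvd_imp_multiplicity_0)
    next
      case True
      have c0: "c \<noteq> 0" using fac lcL0 by auto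
      have eqf: "fract_poly lcL = [:to_fract c:] * (\<Prod>i<length ps. fract_poly (ps!i) ^ (es!i))"
        using fac by (simp only: fract_poly_mult fract_poly_prod fract_poly_power) (simp add: map_poly_pCons)
      have pe: "prime_elem q" using q by simp
      from True have "q dvd [:to_fract c:] * (\<Prod>i<length ps. fract_poly (ps!i) ^ (es!i))" unfolding eqf .
      then have "q dvd [:to_fract c:] \<or> q dvd (\<Prod>i<length ps. fract_poly (ps!i) ^ (es!i))"
        using prime_elem_dvd_mult_iff[OF pe] by blast
      moreover have "\<not> q dvd [:to_fract c:]"
      proof
        assume "q dvd [:to_fract c:]"
        moreover have "is_unit [:to_fract c:]" using c0 by (simp add: is_unit_triv)
        ultimately have "is_unit q" by (rule dvd_unit_imp_unit)
        with q show False by simp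
      qed
      ultimately have "q dvd (\<Prod>i<length ps. fract_poly (ps!i) ^ (es!i))" by blast
      then have "\<exists>i\<in>{..<length ps}. q dvd fract_poly (ps!i) ^ (es!i)"
        by (rule iffD1[OF prime_dvd_prod_iff[where f="\<lambda>i. fract_poly (ps!i) ^ (es!i)" and A="{..<length ps}", OF finite_lessThan q]])
      then obtain i where i: "i < length ps" "q dvd fract_poly (ps!i) ^ (es!i)" by blast
      have "q dvd fract_poly (ps!i)" by (rule prime_elem_dvd_power[OF prime_imp_prime_elem[OF q] i(2)])
      then obtain u where u: "fract_poly (ps!i) = q * u" by blast
      have irrpi: "irreducible (fract_poly (ps!i))" using irreducible_fract[OF pid] irr i(1) by blast
      have "\<not> is_unit q" using q by simp
      then have "is_unit u" using irreducibleD[OF irrpi u] by blast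
      then have "fract_poly (ps!i) = u * q" using u by (simp add: mult.commute)
      then have "multiplicity (fract_poly (ps!i)) = multiplicity q"
        using multiplicity_times_unit_left[OF \<open>is_unit u\<close>] by (intro ext) simp
      then show ?thesis using main[OF i(1)] by simp
    qed
  qed
  then show ?thesis using gauss_div[OF pid prg] by blast
qed

lemma iter_pc: "\<exists>Q. (\<lambda>p. pcompose p (q::'a::comm_ring_1 poly)) ^^ n = (\<lambda>p. pcompose p Q)"
proof (induction n)
  case 0 then show ?case by (intro exI[of _ "[:0,1:]"]) auto
next
  case (Suc n)
  then obtain Q where Q: "(\<lambda>p. pcompose p q) ^^ n = (\<lambda>p. pcompose p Q)" by blast
  show ?case by (intro exI[of _ "pcompose Q q"]) (auto simp: Q pcompose_assoc)
qed

lemma iter_pc_mult: "((\<lambda>p. pcompose p (q::'a::comm_ring_1 poly)) ^^ n) (x * y) = ((\<lambda>p. pcompose p q) ^^ n) x * ((\<lambda>p. pcompose p q) ^^ n) y"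
  using iter_pc[where q=q and n=n] by (auto simp: pcompose_mult)

lemma iter_pc_smult: "((\<lambda>p. pcompose p (q::'a::comm_ring_1 poly)) ^^ n) (smult c x) = smult c (((\<lambda>p. pcompose p q) ^^ n) x)"
  using iter_pc[where q=q and n=n] by (auto simp: pcompose_smult)

lemma iter_pc_0: "((\<lambda>p. pcompose p (q::'a::comm_ring_1 poly)) ^^ n) 0 = 0"
  using iter_pc[where q=q and n=n] by auto

lemma ore_sigma_pc: "ore_sigma \<gamma> \<tau> = (\<lambda>p. pcompose p [:\<tau>, \<gamma>:])"
  by (intro ext) (simp add: ore_sigma_def)

lemma ring_endo_pc: "ring_endo (\<lambda>p. pcompose p (q::'a::comm_ring_1 poly))"
  unfolding ring_endo_def by (simp add: pcompose_add pcompose_mult pcompose_1)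

lemma funpow_cancel:
  fixes F G :: "'a \<Rightarrow> 'a"
  shows "(\<And>x. G (F x) = x) \<Longrightarrow> (G ^^ n) ((F ^^ n) x) = x"
proof (induction n arbitrary: x)
  case 0 then show ?case by simp
next
  case (Suc n)
  have 1: "(G ^^ Suc n) y = (G ^^ n) (G y)" for y by (simp only: funpow_Suc_right o_apply)
  have 2: "(F ^^ Suc n) x = F ((F ^^ n) x)" by simp
  show ?case unfolding 1 2 Suc.prems by (rule Suc.IH[OF Suc.prems])
qed

lemma prim_map:
  fixes F G :: "'a::idom poly \<Rightarrow> 'a poly"
  assumes "\<And>c p. F (smult c p) = smult c (F p)" "\<And>c p. G (smult c p) = smult c (G p)"
    "\<And>p. G (F p) = p" "primitive g"
  shows "primitive (F g)"
  unfolding primitive_def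
proof (intro allI impI)
  fix r assume "\<forall>i. r dvd coeff (F g) i"
  then obtain h where "F g = smult r h" using dvd_coeffs_smult by blast
  then have "g = smult r (G h)" using assms(2,3) by metis
  then have "\<forall>i. r dvd coeff g i" by simp
  with assms(4) show "r dvd 1" unfolding primitive_def by blast
qed

lemma field_endo_nz:
  fixes s :: "'b::field \<Rightarrow> 'b"
  assumes "ring_endo s" "x \<noteq> 0"
  shows "(s ^^ n) x \<noteq> 0"
  using assms(2)
proof (induction n arbitrary: x)
  case 0 then show ?case by simp
next
  case (Suc n)
  have "s x * s (inverse x) = 1" using re_mult[OF assms(1), of x "inverse x"] re_1[OF assms(1)] Suc.prems by simp
  then have "s x \<noteq> 0" by auto
  then show ?case using Suc.IH by (simp add: funpow_swap1)
qed

lemma ore_mult_degree_field: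
  fixes s d :: "'b::field \<Rightarrow> 'b"
  assumes RS: "ring_endo s" and SD: "sigma_derivation s d" and "A \<noteq> 0" "B \<noteq> 0"
  shows "degree (ore_mult s d A B) = degree A + degree B"
proof (rule antisym)
  show "degree (ore_mult s d A B) \<le> degree A + degree B" by (rule degree_ore_mult_le[OF RS SD])
  have "coeff (ore_mult s d A B) (degree A + degree B) \<noteq> 0"
    using coeff_ore_mult_top[OF RS SD] field_endo_nz[OF RS] assms(3,4) by simp
  then show "degree A + degree B \<le> degree (ore_mult s d A B)" by (rule le_degree)
qed

lemma map_ipow_neg: "map_ipow s (- int m) = inv s ^^ m"
  unfolding map_ipow_def by (cases "m = 0") simp_all

lemma fdiv_aux: "(z::'b::field) \<noteq> 0 \<Longrightarrow> x = y / z * w \<Longrightarrow> x * z = y * w"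
  by (simp add: field_simps)

lemma fdiv_aux2: "(z::'b::field) \<noteq> 0 \<Longrightarrow> x * z = y * w \<Longrightarrow> x = y / z * w"
  by (simp add: field_simps)

lemma to_fract_emb: "emb = to_fract" by (intro ext) (simp add: emb_def to_fract_def)
lemma lift_op_fp: "lift_op = fract_poly" by (intro ext) (simp add: lift_op_def to_fract_emb)

theorem mainTheorem1:
  fixes \<gamma> \<tau> a :: "'a::idom" and \<delta> :: "'a poly \<Rightarrow> 'a poly"
    and sQ dQ :: "'a poly fract \<Rightarrow> 'a poly fract"
    and L T :: "'a poly poly" and g :: "'a poly" and k :: nat
  assumes "pid TYPE('a)"
    and "ore_data \<gamma> \<tau> \<delta> sQ dQ"
    and "degree L > 0"
    and "desingularized \<gamma> \<tau> sQ dQ L T"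
    and "lead_coeff T = smult a g" and "primitive g"
    and "T \<in> Mk sQ dQ k L"
  shows "contraction sQ dQ L = saturation (left_ideal_gen (ore_sigma \<gamma> \<tau>) \<delta> (Mk sQ dQ k L)) a"
proof -
  let ?\<sigma> = "ore_sigma \<gamma> \<tau>"
  let ?C = "contraction sQ dQ L"
  let ?M = "Mk sQ dQ k L"
  let ?I = "left_ideal_gen ?\<sigma> \<delta> ?M"
  have pid: "pid TYPE('a)" by (rule assms(1))
  have gu: "\<gamma> dvd 1" and SD: "sigma_derivation ?\<sigma> \<delta>"
    and RQ: "ring_endo sQ" and SDQ: "sigma_derivation sQ dQ"
    and sE: "\<And>p. sQ (to_fract p) = to_fract (?\<sigma> p)" and dE: "\<And>p. dQ (to_fract p) = to_fract (\<delta> p)"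
    using assms(2) unfolding ore_data_def to_fract_emb by auto
  obtain \<gamma>' where \<gamma>': "1 = \<gamma> * \<gamma>'" using gu by (elim dvdE)
  have \<gamma>'': "\<gamma>' * \<gamma> = 1" using \<gamma>' by (simp add: mult.commute)
  define \<iota> where "\<iota> = [:- (\<tau> * \<gamma>'), \<gamma>':]"
  define \<sigma>i where "\<sigma>i = (\<lambda>p::'a poly. pcompose p \<iota>)"
  have sp: "?\<sigma> = (\<lambda>p. pcompose p [:\<tau>, \<gamma>:])" by (rule ore_sigma_pc)
  have c1: "pcompose [:\<tau>, \<gamma>:] \<iota> = [:0, 1:]"
    unfolding \<iota>_def using \<gamma>' \<gamma>'' by (simp add: pcompose_pCons algebra_simps)
  have c2: "pcompose \<iota> [:\<tau>, \<gamma>:] = [:0, 1:]"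
    unfolding \<iota>_def using \<gamma>' \<gamma>'' by (simp add: pcompose_pCons algebra_simps)
  have sinv1: "\<sigma>i (?\<sigma> p) = p" for p unfolding \<sigma>i_def sp by (simp add: pcompose_assoc[symmetric] c1)
  have sinv2: "?\<sigma> (\<sigma>i p) = p" for p unfolding \<sigma>i_def sp by (simp add: pcompose_assoc[symmetric] c2)
  have inv_eq: "inv ?\<sigma> = \<sigma>i" by (rule inv_equality) (simp_all add: sinv1 sinv2)
  have RS: "ring_endo ?\<sigma>" unfolding sp by (rule ring_endo_pc)
  have s0: "?\<sigma> 0 = 0" using re_0[OF RS] .
  have d0: "\<delta> 0 = 0" using sd_0[OF SD] .
  have sQ0: "sQ 0 = 0" using re_0[OF RQ] .
  have dQ0: "dQ 0 = 0" using sd_0[OF SDQ] .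
  have liftm: "fract_poly (ore_mult ?\<sigma> \<delta> A B) = ore_mult sQ dQ (fract_poly A) (fract_poly B)" for A B
    by (rule ore_mult_hom) (simp_all add: sE dE s0 d0 sQ0 dQ0)
  have Cmem: "P \<in> ?C \<longleftrightarrow> (\<exists>Q. fract_poly P = ore_mult sQ dQ Q (fract_poly L))" for P
    unfolding contraction_def lift_op_fp by simp
  have C0: "0 \<in> ?C" unfolding Cmem by (intro exI[of _ 0]) (simp add: ore_mult_zero_left[OF RQ SDQ])
  have Cadd: "X + Y \<in> ?C" if hyp: "X \<in> ?C" "Y \<in> ?C" for X Y
  proof -
    obtain Q1 Q2 where "fract_poly X = ore_mult sQ dQ Q1 (fract_poly L)" "fract_poly Y = ore_mult sQ dQ Q2 (fract_poly L)"
      using hyp unfolding Cmem by blast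
    then show ?thesis unfolding Cmem by (intro exI[of _ "Q1 + Q2"]) (simp add: ore_mult_add_left[OF RQ SDQ])
  qed
  have Cdiff: "X - Y \<in> ?C" if hyp: "X \<in> ?C" "Y \<in> ?C" for X Y
  proof -
    obtain Q1 Q2 where "fract_poly X = ore_mult sQ dQ Q1 (fract_poly L)" "fract_poly Y = ore_mult sQ dQ Q2 (fract_poly L)"
      using hyp unfolding Cmem by blast
    then show ?thesis unfolding Cmem by (intro exI[of _ "Q1 - Q2"]) (simp add: ore_mult_diff_left[OF RQ SDQ])
  qed
  have Cmul: "ore_mult ?\<sigma> \<delta> A X \<in> ?C" if hyp: "X \<in> ?C" for A X
  proof -
    obtain Q where "fract_poly X = ore_mult sQ dQ Q (fract_poly L)" using hyp unfolding Cmem by blast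
    then show ?thesis unfolding Cmem
      by (intro exI[of _ "ore_mult sQ dQ (fract_poly A) Q"]) (simp add: liftm ore_mult_assoc[OF RQ SDQ])
  qed
  have Csmult: "smult c X \<in> ?C" if hyp: "X \<in> ?C" for c X
  proof -
    obtain Q where "fract_poly X = ore_mult sQ dQ Q (fract_poly L)" using hyp unfolding Cmem by blast
    then show ?thesis unfolding Cmem
      by (intro exI[of _ "smult (to_fract c) Q"]) (simp add: ore_mult_smult_left[OF RQ SDQ])
  qed
  have MC: "?M \<subseteq> ?C" unfolding Mk_def by auto
  have IC: "?I \<subseteq> ?C"
  proof
    fix P assume "P \<in> ?I"
    then obtain xs where xs: "set (map snd xs) \<subseteq> ?M" "P = sum_list (map (\<lambda>(Q, B). ore_mult ?\<sigma> \<delta> Q B) xs)"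
      unfolding left_ideal_gen_def by blast
    have "set (map snd xs) \<subseteq> ?M \<Longrightarrow> sum_list (map (\<lambda>(Q, B). ore_mult ?\<sigma> \<delta> Q B) xs) \<in> ?C"
    proof (induction xs)
      case Nil then show ?case using C0 by simp
    next
      case (Cons x xs)
      obtain Q B where x: "x = (Q, B)" by (cases x)
      have "B \<in> ?C" using Cons.prems x MC by auto
      then have "ore_mult ?\<sigma> \<delta> Q B \<in> ?C" by (rule Cmul)
      moreover have "sum_list (map (\<lambda>(Q, B). ore_mult ?\<sigma> \<delta> Q B) xs) \<in> ?C" using Cons by auto
      ultimately show ?case using x Cadd by simp
    qed
    with xs show "P \<in> ?C" by simp
  qed
  have Iadd: "X + Y \<in> ?I" if hyp: "X \<in> ?I" "Y \<in> ?I" for X Y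
  proof -
    obtain xs ys where "set (map snd xs) \<subseteq> ?M" "X = sum_list (map (\<lambda>(Q, B). ore_mult ?\<sigma> \<delta> Q B) xs)"
      "set (map snd ys) \<subseteq> ?M" "Y = sum_list (map (\<lambda>(Q, B). ore_mult ?\<sigma> \<delta> Q B) ys)"
      using hyp unfolding left_ideal_gen_def by blast
    then show ?thesis unfolding left_ideal_gen_def by (intro CollectI exI[of _ "xs @ ys"]) auto
  qed
  have Igen: "ore_mult ?\<sigma> \<delta> Q B \<in> ?I" if "B \<in> ?M" for Q B
    using that unfolding left_ideal_gen_def by (intro CollectI exI[of _ "[(Q, B)]"]) auto
  have T0: "T \<noteq> 0" and TC: "T \<in> ?C" using assms(4) unfolding desingularized_def by auto
  obtain c ps es where fac: "lead_coeff L = [:c:] * (\<Prod>i<length ps. (ps ! i) ^ (es ! i))"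
    and irr: "\<forall>i<length ps. irreducible (ps ! i) \<and> degree (ps ! i) > 0"
    and rest: "\<exists>\<alpha> b ks. b \<noteq> 0 \<and> length ks = length ps \<and>
           emb (map_ipow ?\<sigma> (int (degree L) - int (degree T)) (lead_coeff T))
             = emb [:\<alpha>:] / (emb [:b:] * emb (\<Prod>i<length ps. (ps ! i) ^ (ks ! i))) * emb (lead_coeff L) \<and>
           (\<forall>i<length ps. \<forall>d. d > ks ! i \<longrightarrow> non_removable \<gamma> \<tau> sQ dQ L ((ps ! i) ^ d))"
    using assms(4) unfolding desingularized_def by blast
  obtain \<alpha> b ks where b0: "b \<noteq> 0"
    and eqT: "to_fract (map_ipow ?\<sigma> (int (degree L) - int (degree T)) (lead_coeff T))
             = to_fract [:\<alpha>:] / (to_fract [:b:] * to_fract (\<Prod>i<length ps. (ps ! i) ^ (ks ! i))) * to_fract (lead_coeff L)"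
    and NRs: "\<forall>i<length ps. \<forall>d. d > ks ! i \<longrightarrow> non_removable \<gamma> \<tau> sQ dQ L ((ps ! i) ^ d)"
    using rest unfolding to_fract_emb by blast
  have TM: "degree T \<le> k" using assms(7) unfolding Mk_def by auto
  have a0: "a \<noteq> 0" using assms(5) T0 by auto
  have L0: "L \<noteq> 0" using assms(3) by auto
  have fL0: "fract_poly L \<noteq> 0" using L0 by simp
  have lcL0: "lead_coeff L \<noteq> 0" using L0 by simp
  obtain QT where QT: "fract_poly T = ore_mult sQ dQ QT (fract_poly L)" using TC unfolding Cmem by blast
  have QT0: "QT \<noteq> 0" using QT T0 by (auto simp: ore_mult_zero_left[OF RQ SDQ])
  have degT: "degree T = degree QT + degree L"
  proof -
    have "degree T = degree (fract_poly T)" by (simp only: degree_fract_poly)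
    also have "\<dots> = degree (ore_mult sQ dQ QT (fract_poly L))" by (simp only: QT)
    also have "\<dots> = degree QT + degree (fract_poly L)" by (rule ore_mult_degree_field[OF RQ SDQ QT0 fL0])
    finally show ?thesis by (simp only: degree_fract_poly)
  qed
  define mT where "mT = degree QT"
  define g' where "g' = (\<sigma>i ^^ mT) g"
  have sT: "map_ipow ?\<sigma> (int (degree L) - int (degree T)) = \<sigma>i ^^ mT"
  proof -
    have "int (degree L) - int (degree T) = - int mT" using degT unfolding mT_def by simp
    then show ?thesis by (simp add: map_ipow_neg inv_eq)
  qed
  have lcT': "(\<sigma>i ^^ mT) (lead_coeff T) = smult a g'"
    unfolding assms(5) g'_def \<sigma>i_def by (rule iter_pc_smult)
  have sigpow_smult: "(?\<sigma> ^^ n) (smult c x) = smult c ((?\<sigma> ^^ n) x)" for n c x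
    unfolding sp by (rule iter_pc_smult)
  have sigpow_mult: "(?\<sigma> ^^ n) (x * y) = (?\<sigma> ^^ n) x * (?\<sigma> ^^ n) y" for n x y
    unfolding sp by (rule iter_pc_mult)
  have sigpow_0: "(?\<sigma> ^^ n) 0 = 0" for n unfolding sp by (rule iter_pc_0)
  have sigcancel: "(?\<sigma> ^^ n) ((\<sigma>i ^^ n) x) = x" for n x by (rule funpow_cancel) (rule sinv2)
  have sipow_smult: "(\<sigma>i ^^ n) (smult c x) = smult c ((\<sigma>i ^^ n) x)" for n c x
    unfolding \<sigma>i_def by (rule iter_pc_smult)
  have prg': "primitive g'"
    unfolding g'_def using sipow_smult sigpow_smult sigcancel assms(6) by (rule prim_map)
  have ps0: "ps ! i \<noteq> 0" if "i < length ps" for i using irr that by auto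
  define Pk where "Pk = (\<Prod>i<length ps. (ps ! i) ^ (ks ! i))"
  have Pk0: "Pk \<noteq> 0" unfolding Pk_def using ps0 by simp
  have g'0: "g' \<noteq> 0" using primitive_nonzero[OF prg'] .
  have eqT2: "to_fract (smult a g' * ([:b:] * Pk)) = to_fract ([:\<alpha>:] * lead_coeff L)"
  proof -
    have nz: "to_fract [:b:] * to_fract Pk \<noteq> 0" using b0 Pk0 by simp
    have e: "to_fract (smult a g') = to_fract [:\<alpha>:] / (to_fract [:b:] * to_fract Pk) * to_fract (lead_coeff L)"
      using eqT unfolding sT lcT' Pk_def[symmetric] .
    show ?thesis using fdiv_aux[OF nz e] unfolding to_fract_mult .
  qed
  then have eqT3: "smult a g' * ([:b:] * Pk) = [:\<alpha>:] * lead_coeff L" by (simp only: to_fract_eq_iff)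
  have \<alpha>0: "\<alpha> \<noteq> 0" using eqT3 a0 g'0 b0 Pk0 by auto
  have lcg: "fract_poly (Pk * g') dvd fract_poly (lead_coeff L)"
  proof -
    have "[:\<alpha>:] * lead_coeff L = [:a * b:] * (Pk * g')" using eqT3 by (simp add: ac_simps)
    then have "[:to_fract \<alpha>:] * fract_poly (lead_coeff L) = [:to_fract (a * b):] * fract_poly (Pk * g')"
      by (metis fract_poly_mult fract_poly_pCons fract_poly_0)
    then have d1: "fract_poly (Pk * g') dvd [:to_fract \<alpha>:] * fract_poly (lead_coeff L)" by (metis dvd_triv_right)
    have u: "is_unit [:to_fract \<alpha>:]" using \<alpha>0 by (simp add: is_unit_triv)
    show ?thesis using d1 unfolding dvd_mult_unit_iff'[OF u] .
  qed
  have klem: "\<exists>h. lead_coeff P = (?\<sigma> ^^ (degree P - degree T)) g * h"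
    if PC: "P \<in> ?C" and dP: "degree T \<le> degree P" for P
  proof -
    obtain Q where Q: "fract_poly P = ore_mult sQ dQ Q (fract_poly L)" using PC unfolding Cmem by blast
    have P0: "P \<noteq> 0" using dP degT assms(3) by auto
    have Q0: "Q \<noteq> 0" using Q P0 by (auto simp: ore_mult_zero_left[OF RQ SDQ])
    have degP: "degree P = degree Q + degree L"
    proof -
      have "degree P = degree (fract_poly P)" by (simp only: degree_fract_poly)
      also have "\<dots> = degree (ore_mult sQ dQ Q (fract_poly L))" by (simp only: Q)
      also have "\<dots> = degree Q + degree (fract_poly L)" by (rule ore_mult_degree_field[OF RQ SDQ Q0 fL0])
      finally show ?thesis by (simp only: degree_fract_poly)
    qed
    define m where "m = degree Q"
    define W where "W = (\<sigma>i ^^ m) (lead_coeff P)"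
    have lcP: "lead_coeff P = (?\<sigma> ^^ m) W" unfolding W_def by (simp add: sigcancel)
    have W0: "W \<noteq> 0" using lcP P0 sigpow_0 by auto
    have NR: "\<forall>i<length ps. \<forall>dd > ks!i. \<forall>w v. v \<noteq> 0 \<longrightarrow> coprime_r ((ps!i)^dd) w \<longrightarrow>
               (ps!i)^dd dvd lead_coeff L \<longrightarrow> W * v * (ps!i)^dd = w * lead_coeff L \<longrightarrow> False"
    proof (intro allI impI)
      fix i dd w v
      assume i: "i < length ps" and dd: "dd > ks ! i" and v0: "v \<noteq> 0" and cop: "coprime_r ((ps!i)^dd) w"
        and dv: "(ps!i)^dd dvd lead_coeff L" and eqn: "W * v * (ps!i)^dd = w * lead_coeff L"
      have nr: "non_removable \<gamma> \<tau> sQ dQ L ((ps ! i) ^ dd)" using NRs i dd by blast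
      have pd0: "(ps!i)^dd \<noteq> 0" using ps0[OF i] by simp
      have "to_fract W = to_fract w / (to_fract v * to_fract ((ps!i)^dd)) * to_fract (lead_coeff L)"
      proof -
        have "to_fract W * (to_fract v * to_fract ((ps!i)^dd)) = to_fract w * to_fract (lead_coeff L)"
          using eqn by (simp flip: to_fract_mult add: mult.assoc)
        moreover have "to_fract v * to_fract ((ps!i)^dd) \<noteq> 0" using v0 pd0 by simp
        ultimately show ?thesis using fdiv_aux2 by blast
      qed
      then have "removable_at \<gamma> \<tau> sQ dQ L ((ps ! i) ^ dd) m"
        unfolding removable_at_def using assms(3) dv Q0 cop v0 Q
        by (intro conjI exI[of _ Q] exI[of _ w] exI[of _ v] exI[of _ P])
           (simp_all add: m_def lift_op_fp to_fract_emb map_ipow_neg inv_eq W_def)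
      with nr show False unfolding non_removable_def by blast
    qed
    have "g' dvd W" by (rule key_alg[OF pid lcL0 fac irr lcg[unfolded Pk_def] prg' W0 NR])
    then obtain h0 where h0: "W = g' * h0" by blast
    have mm: "m = (degree P - degree T) + mT" using degP degT dP unfolding m_def mT_def by simp
    have "(?\<sigma> ^^ m) g' = (?\<sigma> ^^ (degree P - degree T)) g"
      unfolding mm funpow_add g'_def by (simp add: sigcancel)
    then have "lead_coeff P = (?\<sigma> ^^ (degree P - degree T)) g * (?\<sigma> ^^ m) h0"
      using lcP h0 by (simp add: sigpow_mult)
    then show ?thesis by blast
  qed
  have red: "\<exists>i. smult [:a ^ i:] P \<in> ?I" if "P \<in> ?C" for P
    using that
  proof (induction "degree P" arbitrary: P rule: less_induct)
    case less
    show ?case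
    proof (cases "degree P < degree T")
      case True
      then have "P \<in> ?M" using less.prems TM unfolding Mk_def by auto
      then have "ore_mult ?\<sigma> \<delta> 1 P \<in> ?I" by (rule Igen)
      then have "smult [:a ^ 0:] P \<in> ?I" by (simp add: ore_mult_one_left[OF RS SD] one_pCons[symmetric])
      then show ?thesis by blast
    next
      case False
      then have dP: "degree T \<le> degree P" by simp
      obtain h where h: "lead_coeff P = (?\<sigma> ^^ (degree P - degree T)) g * h" using klem[OF less.prems dP] by blast
      define j where "j = degree P - degree T"
      define n where "n = degree P"
      have nj: "degree T + j = n" unfolding j_def n_def using dP by simp
      have n0: "n > 0" using dP degT assms(3) unfolding n_def by simp
      define P' where "P' = smult [:a:] P - ore_mult ?\<sigma> \<delta> (monom h j) T"
      have P'C: "P' \<in> ?C" unfolding P'_def using Csmult[OF less.prems] Cmul[OF TC] by (intro Cdiff)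
      have cP': "coeff P' n = 0"
      proof -
        have "coeff (ore_mult ?\<sigma> \<delta> (monom h j) T) n = h * (?\<sigma> ^^ j) (lead_coeff T)"
          using ore_mult_monom_coeff[OF RS SD, of h j T] nj by simp
        also have "\<dots> = [:a:] * lead_coeff P"
          unfolding assms(5) sigpow_smult h j_def by (simp add: ac_simps)
        finally show ?thesis unfolding P'_def n_def by simp
      qed
      have "degree P' \<le> n"
        unfolding P'_def
      proof (rule degree_diff_le)
        show "degree (smult [:a:] P) \<le> n" unfolding n_def by (rule degree_smult_le)
        show "degree (ore_mult ?\<sigma> \<delta> (monom h j) T) \<le> n"
          using ore_mult_monom_degree[OF RS SD, of h j T] nj by simp
      qed
      have dP': "degree P' < degree P"
      proof (cases "P' = 0")
        case True then show ?thesis using n0 unfolding n_def by simp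
      next
        case False
        then have "coeff P' (degree P') \<noteq> 0" by simp
        then have "degree P' \<noteq> n" using cP' by auto
        with \<open>degree P' \<le> n\<close> show ?thesis unfolding n_def by simp
      qed
      obtain i where i: "smult [:a ^ i:] P' \<in> ?I" using less.hyps[OF dP' P'C] by blast
      have "smult [:a ^ Suc i:] P = smult [:a ^ i:] P' + ore_mult ?\<sigma> \<delta> (smult [:a ^ i:] (monom h j)) T"
        unfolding P'_def by (simp add: ore_mult_smult_left[OF RS SD] smult_diff_right mult.commute)
      moreover have "T \<in> ?M" by (rule assms(7))
      ultimately have "smult [:a ^ Suc i:] P \<in> ?I" using Iadd[OF i Igen] by simp
      then show ?thesis by blast
    qed
  qed
  show ?thesis
  proof (intro equalityI subsetI)
    fix P assume "P \<in> ?C"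
    then show "P \<in> saturation ?I a" unfolding saturation_def using red by blast
  next
    fix P assume "P \<in> saturation ?I a"
    then obtain i where "smult [:a ^ i:] P \<in> ?I" unfolding saturation_def by blast
    then have "smult [:a ^ i:] P \<in> ?C" using IC by blast
    then obtain Q where Q: "fract_poly (smult [:a ^ i:] P) = ore_mult sQ dQ Q (fract_poly L)" unfolding Cmem by blast
    have ai: "to_fract [:a ^ i:] \<noteq> 0" using a0 by simp
    have "fract_poly P = smult (inverse (to_fract [:a ^ i:])) (fract_poly (smult [:a ^ i:] P))"
      using ai by simp
    also have "\<dots> = ore_mult sQ dQ (smult (inverse (to_fract [:a ^ i:])) Q) (fract_poly L)"
      unfolding Q by (simp add: ore_mult_smult_left[OF RQ SDQ])
    finally show "P \<in> ?C" unfolding Cmem by blast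
  qed
qed

end
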